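(* For any $\alpha\in(1/2,1]$, the collection of random variables \[ \Big\{\frac{n^\alpha}{I^n(\infty)}\,\mathbb I\big(I^n(\infty)>0\big)\Big\}_{n\in\mathbb N} \] (i.e. $(\hat I^n_\alpha(\infty))^{-1}$ on $\{I^n(\infty)>0\}$ and $0$ otherwise) is uniformly integrable.
   Context: Model: for each $n$, Poisson arrivals with rate $\lambda^n$, $\lambda^n/n\to\bar\lambda\in(0,\infty)$; for fixed $\alpha$ and $\beta>0$ there are $N^n=\lambda^n/\bar\mu_F+\beta(\lambda^n/\bar\mu_F)^\alpha$ servers; service rates $\tilde\mu^n_k$ are i.i.d. with distribution $F$ of mean $\bar\mu_F$, and $0<\mu_{\min}\le\tilde\mu^n_k\le\mu_{\max}<\infty$ a.s.; service at server $k$ is exponential($\tilde\mu^n_k$); arrivals finding idle servers are routed by a non-idling routing policy; FCFS queue with exponential($\gamma$) abandonment. $I^n_k(t)=1$ if server $k$ is idle at $t$ and $0$ otherwise, $I^n(t)=\sum_kI^n_k(t)$, $\hat I^n_\alpha=n^{-\alpha}I^n$, and $I^n(\infty)$ is distributed according to the stationary distribution of the $n$th system. $\mathbb I(\cdot)$ is the indicator function. *)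

theory Defs
  imports "HOL-Probability.Probability"
begin

text \<open>State of the n-th system: (set of idle servers, queue length). Service rates mu :: nat => real.
  route S is the (Markovian, state-dependent) distribution of the idle server
  chosen for an arrival finding the set S of idle servers.\<close>

type_synonym qstate = "nat set \<times> nat"

definition valid_state :: "nat \<Rightarrow> qstate \<Rightarrow> bool" where
  "valid_state N x \<longleftrightarrow> fst x \<subseteq> {..<N} \<and> (snd x > 0 \<longrightarrow> fst x = {})"

definition trans_rate ::
  "real \<Rightarrow> real \<Rightarrow> nat \<Rightarrow> (nat \<Rightarrow> real) \<Rightarrow> (nat set \<Rightarrow> nat pmf)
     \<Rightarrow> qstate \<Rightarrow> qstate \<Rightarrow> real" where
  "trans_rate lam gam N mu route x y =
     (let S = fst x; q = snd x; S' = fst y; q' = snd y in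
       \<comment> \<open>arrivals\<close>
       (if S \<noteq> {} then (\<Sum>k\<in>S. if S' = S - {k} \<and> q' = q then lam * pmf (route S) k else 0)
        else (if S' = {} \<and> q' = q + 1 then lam else 0))
       \<comment> \<open>service completions with empty queue: server becomes idle\<close>
     + (if q = 0 then (\<Sum>k\<in>{..<N} - S. if S' = insert k S \<and> q' = 0 then mu k else 0) else 0)
       \<comment> \<open>service completions (next customer in queue enters service) and abandonments\<close>
     + (if q > 0 \<and> S' = S \<and> q' = q - 1 then (\<Sum>k<N. mu k) + gam * real q else 0))"

definition stationary ::
  "real \<Rightarrow> real \<Rightarrow> nat \<Rightarrow> (nat \<Rightarrow> real) \<Rightarrow> (nat set \<Rightarrow> nat pmf) \<Rightarrow> qstate pmf \<Rightarrow> bool" where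
  "stationary lam gam N mu route p \<longleftrightarrow>
     set_pmf p \<subseteq> {x. valid_state N x} \<and>
     (\<forall>x. pmf p x * (\<Sum>\<^sub>\<infinity>y. trans_rate lam gam N mu route x y)
          = (\<Sum>\<^sub>\<infinity>y. pmf p y * trans_rate lam gam N mu route y x))"

definition idle_count :: "qstate \<Rightarrow> nat" where
  "idle_count x = card (fst x)"

definition inv_idle :: "real \<Rightarrow> nat \<Rightarrow> qstate \<Rightarrow> real" where
  "inv_idle \<alpha> n x = (if idle_count x > 0 then real n powr \<alpha> / real (idle_count x) else 0)"

end

theory Submission
  imports Defs
begin


lemma infsum_fin_supp:
  fixes f :: "'a \<Rightarrow> real"
  assumes "finite Y" "\<And>y. y \<notin> Y \<Longrightarrow> f y = 0"
  shows "(\<Sum>\<^sub>\<infinity>y. f y) = sum f Y"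
  using assms by (subst infsum_cong_neutral[where T=Y and g=f]) auto

lemma sum_points:
  fixes c :: "'k \<Rightarrow> real"
  assumes "finite K"
  shows "(\<Sum>y\<in>a ` K. (\<Sum>k\<in>K. if y = a k then c k else 0)) = (\<Sum>k\<in>K. c k)"
  using assms by (subst sum.swap) (simp add: sum.delta)

lemma infsum_points2:
  fixes c d :: "'k \<Rightarrow> real"
  assumes "finite K" "finite K'"
  shows "(\<Sum>\<^sub>\<infinity>y. (\<Sum>k\<in>K. if y = a k then c k else 0) + (\<Sum>k\<in>K'. if y = b k then d k else 0))
     = (\<Sum>k\<in>K. c k) + (\<Sum>k\<in>K'. d k)"
proof -
  let ?Y = "a ` K \<union> b ` K'"
  have "(\<Sum>\<^sub>\<infinity>y. (\<Sum>k\<in>K. if y = a k then c k else 0) + (\<Sum>k\<in>K'. if y = b k then d k else 0))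
    = (\<Sum>y\<in>?Y. (\<Sum>k\<in>K. if y = a k then c k else 0) + (\<Sum>k\<in>K'. if y = b k then d k else 0))"
  proof (rule infsum_fin_supp)
    fix y assume "y \<notin> ?Y"
    then have "(\<Sum>k\<in>K. if y = a k then c k else 0) = 0" "(\<Sum>k\<in>K'. if y = b k then d k else 0) = 0"
      by (auto intro!: sum.neutral)
    then show "(\<Sum>k\<in>K. if y = a k then c k else 0) + (\<Sum>k\<in>K'. if y = b k then d k else 0) = 0" by simp
  qed (use assms in auto)
  also have "\<dots> = (\<Sum>y\<in>?Y. (\<Sum>k\<in>K. if y = a k then c k else 0)) + (\<Sum>y\<in>?Y. (\<Sum>k\<in>K'. if y = b k then d k else 0))"
    by (simp add: sum.distrib)
  also have "(\<Sum>y\<in>?Y. (\<Sum>k\<in>K. if y = a k then c k else 0)) = (\<Sum>k\<in>K. c k)"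
    using assms by (subst sum.swap) (auto simp add: sum.delta)
  also have "(\<Sum>y\<in>?Y. (\<Sum>k\<in>K'. if y = b k then d k else 0)) = (\<Sum>k\<in>K'. d k)"
    using assms by (subst sum.swap) (auto simp add: sum.delta)
  finally show ?thesis .
qed


lemma out_rate:
  assumes "S \<noteq> {}" "finite S"
  shows "(\<Sum>\<^sub>\<infinity>y. trans_rate lam gam N mu route (S,0) y)
       = lam * (\<Sum>k\<in>S. pmf (route S) k) + (\<Sum>k\<in>{..<N}-S. mu k)"
proof -
  have pt: "trans_rate lam gam N mu route (S,0) y =
     (\<Sum>k\<in>S. if y = (S - {k}, 0) then lam * pmf (route S) k else 0)
   + (\<Sum>k\<in>{..<N}-S. if y = (insert k S, 0) then mu k else 0)" for y
    using assms unfolding trans_rate_def Let_def fst_conv snd_conv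
    by (cases y) auto
  have "(\<Sum>\<^sub>\<infinity>y. trans_rate lam gam N mu route (S,0) y) =
     (\<Sum>\<^sub>\<infinity>y. (\<Sum>k\<in>S. if y = (S - {k}, 0::nat) then lam * pmf (route S) k else 0)
   + (\<Sum>k\<in>{..<N}-S. if y = (insert k S, 0) then mu k else 0))" by (rule infsum_cong) (rule pt)
  also have "\<dots> = (\<Sum>k\<in>S. lam * pmf (route S) k) + (\<Sum>k\<in>{..<N}-S. mu k)"
    using assms by (intro infsum_points2) simp_all
  finally show ?thesis by (simp add: sum_distrib_left)
qed

lemma sum_if_unique:
  assumes "finite K" "\<And>k. k \<in> K \<Longrightarrow> P k \<Longrightarrow> k = kk"
  shows "(\<Sum>k\<in>K. if P k then f k else 0) = (if kk \<in> K \<and> P kk then f kk else (0::real))"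
proof -
  have "(\<Sum>k\<in>K. if P k then f k else 0) = (\<Sum>k\<in>K. if k = kk then (if P kk then f kk else 0) else 0)"
    by (rule sum.cong) (use assms(2) in blast, metis assms(2))
  also have "\<dots> = (if kk \<in> K \<and> P kk then f kk else (0::real))"
    using assms(1) by (simp add: sum.delta)
  finally show ?thesis .
qed

lemma tr_q0:
  assumes S: "S \<noteq> {}" and Pair: "y = (S', q')" and q0: "q' = 0"
  shows "trans_rate lam gam N mu route y (S,0) =
     (if S' \<noteq> {} then (\<Sum>k\<in>S'. if S = S' - {k} then lam * pmf (route S') k else 0) else 0)
   + (\<Sum>k\<in>{..<N} - S'. if S = insert k S' then mu k else 0)"
  using S unfolding Pair q0 trans_rate_def Let_def fst_conv snd_conv by simp

lemma tr_qpos: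
  assumes S: "S \<noteq> {}" and Pair: "y = (S', q')" and q0: "q' > 0" "S' = {}"
  shows "trans_rate lam gam N mu route y (S,0) = 0"
  using S q0 unfolding Pair trans_rate_def Let_def fst_conv snd_conv by simp

lemma in_rate_pt:
  assumes S: "S \<noteq> {}" "S \<subseteq> {..<N}" and y: "valid_state N y"
  shows "trans_rate lam gam N mu route y (S,0) =
     (\<Sum>k\<in>{..<N}-S. if y = (insert k S, 0) then lam * pmf (route (insert k S)) k else 0)
   + (\<Sum>k\<in>S. if y = (S - {k}, 0) then mu k else 0)"
proof (cases y)
  case (Pair S' q')
  have finS: "finite S" using S finite_subset by blast
  have S': "S' \<subseteq> {..<N}" "q' > 0 \<Longrightarrow> S' = {}" using y Pair by (auto simp: valid_state_def)
  have finS': "finite S'" using S' finite_subset by blast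
  show ?thesis
  proof (cases "q' = 0")
    case False
    have l: "trans_rate lam gam N mu route y (S,0) = 0"
      using False S' by (intro tr_qpos[OF S(1) Pair]) auto
    have r1: "(\<Sum>k\<in>{..<N}-S. if y = (insert k S, 0) then lam * pmf (route (insert k S)) k else 0) = 0"
      using False Pair by (intro sum.neutral) auto
    have r2: "(\<Sum>k\<in>S. if y = (S - {k}, 0) then mu k else 0) = 0"
      using False Pair by (intro sum.neutral) auto
    show ?thesis using l r1 r2 by simp
  next
    case q0: True
    have A: "(if S' \<noteq> {} then (\<Sum>k\<in>S'. if S = S' - {k} then lam * pmf (route S') k else 0) else 0)
        = (\<Sum>k\<in>{..<N}-S. if y = (insert k S, 0) then lam * pmf (route (insert k S)) k else 0)"
    proof (cases "\<exists>kk\<in>{..<N}-S. S' = insert kk S")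
      case True
      then obtain kk where kk: "kk \<in> {..<N}" "kk \<notin> S" "S' = insert kk S" by auto
      have "(\<Sum>k\<in>S'. if S = S' - {k} then lam * pmf (route S') k else 0)
          = (if kk \<in> S' \<and> S = S' - {kk} then lam * pmf (route S') kk else 0)"
        by (rule sum_if_unique[OF finS']) (use kk in blast)
      also have "\<dots> = lam * pmf (route S') kk" using kk by auto
      finally have l: "(\<Sum>k\<in>S'. if S = S' - {k} then lam * pmf (route S') k else 0) = lam * pmf (route S') kk" .
      have "(\<Sum>k\<in>{..<N}-S. if y = (insert k S, 0) then lam * pmf (route (insert k S)) k else 0)
          = (if kk \<in> {..<N}-S \<and> y = (insert kk S, 0) then lam * pmf (route (insert kk S)) kk else 0)"
        by (rule sum_if_unique) (use kk Pair in blast)+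
      also have "\<dots> = lam * pmf (route S') kk" using kk Pair q0 by auto
      finally have r: "(\<Sum>k\<in>{..<N}-S. if y = (insert k S, 0) then lam * pmf (route (insert k S)) k else 0)
           = lam * pmf (route S') kk" .
      have "S' \<noteq> {}" using kk by auto
      then show ?thesis using l r by simp
    next
      case False
      have l: "(\<Sum>k\<in>S'. if S = S' - {k} then lam * pmf (route S') k else 0) = 0"
      proof (rule sum.neutral, intro ballI)
        fix k assume k: "k \<in> S'"
        show "(if S = S' - {k} then lam * pmf (route S') k else 0) = 0"
        proof (cases "S = S' - {k}")
          case True
          then have "S' = insert k S" "k \<notin> S" "k \<in> {..<N}" using k S' by auto
          then show ?thesis using False by blast
        qed simp
      qed
      have r: "(\<Sum>k\<in>{..<N}-S. if y = (insert k S, 0) then lam * pmf (route (insert k S)) k else 0) = 0"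
        using False Pair by (intro sum.neutral) auto
      show ?thesis using l r by simp
    qed
    have B: "(\<Sum>k\<in>{..<N} - S'. if S = insert k S' then mu k else 0)
        = (\<Sum>k\<in>S. if y = (S - {k}, 0) then mu k else 0)"
    proof (cases "\<exists>kk\<in>S. S' = S - {kk}")
      case True
      then obtain kk where kk: "kk \<in> S" "S' = S - {kk}" by auto
      have "(\<Sum>k\<in>{..<N} - S'. if S = insert k S' then mu k else 0)
          = (if kk \<in> {..<N} - S' \<and> S = insert kk S' then mu kk else 0)"
        by (rule sum_if_unique) (use kk in blast)+
      also have "\<dots> = mu kk" using kk S by auto
      finally have l: "(\<Sum>k\<in>{..<N} - S'. if S = insert k S' then mu k else 0) = mu kk" .
      have "(\<Sum>k\<in>S. if y = (S - {k}, 0) then mu k else 0)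
          = (if kk \<in> S \<and> y = (S - {kk}, 0) then mu kk else 0)"
        by (rule sum_if_unique[OF finS]) (use kk Pair in blast)
      also have "\<dots> = mu kk" using kk Pair q0 by auto
      finally have r: "(\<Sum>k\<in>S. if y = (S - {k}, 0) then mu k else 0) = mu kk" .
      show ?thesis using l r by simp
    next
      case False
      have l: "(\<Sum>k\<in>{..<N} - S'. if S = insert k S' then mu k else 0) = 0"
      proof (rule sum.neutral, intro ballI)
        fix k assume k: "k \<in> {..<N} - S'"
        show "(if S = insert k S' then mu k else 0) = 0"
        proof (cases "S = insert k S'")
          case True
          then have "S' = S - {k}" "k \<in> S" using k by auto
          then show ?thesis using False by blast
        qed simp
      qed
      have r: "(\<Sum>k\<in>S. if y = (S - {k}, 0) then mu k else 0) = 0"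
        using False Pair q0 by (intro sum.neutral) auto
      show ?thesis using l r by simp
    qed
    show ?thesis using A B tr_q0[OF S(1) Pair q0] by simp
  qed
qed



lemma balance_S:
  assumes stat: "stationary lam gam N mu route p"
    and route_ok: "\<And>S. S \<noteq> {} \<Longrightarrow> set_pmf (route S) \<subseteq> S"
    and S: "S \<noteq> {}" "S \<subseteq> {..<N}"
  shows "pmf p (S,0) * (lam + (\<Sum>k\<in>{..<N}-S. mu k)) =
     lam * (\<Sum>k\<in>{..<N}-S. pmf p (insert k S,0) * pmf (route (insert k S)) k)
     + (\<Sum>k\<in>S. pmf p (S-{k},0) * mu k)"
proof -
  have finS: "finite S" using S finite_subset by blast
  have val: "y \<in> set_pmf p \<Longrightarrow> valid_state N y" for y
    using stat unfolding stationary_def by auto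
  have bal: "pmf p (S,0) * (\<Sum>\<^sub>\<infinity>y. trans_rate lam gam N mu route (S,0) y)
          = (\<Sum>\<^sub>\<infinity>y. pmf p y * trans_rate lam gam N mu route y (S,0))"
    using stat unfolding stationary_def by blast
  have out: "(\<Sum>\<^sub>\<infinity>y. trans_rate lam gam N mu route (S,0) y) = lam + (\<Sum>k\<in>{..<N}-S. mu k)"
    using out_rate[OF S(1) finS] sum_pmf_eq_1[OF finS route_ok[OF S(1)]] by simp
  have pt: "pmf p y * trans_rate lam gam N mu route y (S,0) =
     (\<Sum>k\<in>{..<N}-S. if y = (insert k S, 0) then pmf p (insert k S,0) * (lam * pmf (route (insert k S)) k) else 0)
   + (\<Sum>k\<in>S. if y = (S - {k}, 0) then pmf p (S-{k},0) * mu k else 0)" for y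
  proof (cases "y \<in> set_pmf p")
    case True
    have "pmf p y * trans_rate lam gam N mu route y (S,0) =
     (\<Sum>k\<in>{..<N}-S. pmf p y * (if y = (insert k S, 0) then lam * pmf (route (insert k S)) k else 0))
   + (\<Sum>k\<in>S. pmf p y * (if y = (S - {k}, 0) then mu k else 0))"
      unfolding in_rate_pt[OF S val[OF True]] by (simp add: distrib_left sum_distrib_left)
    also have "\<dots> = (\<Sum>k\<in>{..<N}-S. if y = (insert k S, 0) then pmf p (insert k S,0) * (lam * pmf (route (insert k S)) k) else 0)
   + (\<Sum>k\<in>S. if y = (S - {k}, 0) then pmf p (S-{k},0) * mu k else 0)"
      by (intro arg_cong2[where f="(+)"] sum.cong) auto
    finally show ?thesis .
  next
    case False
    then have z: "pmf p y = 0" by (simp add: set_pmf_iff)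
    have r1: "(\<Sum>k\<in>{..<N}-S. if y = (insert k S, 0) then pmf p (insert k S,0) * (lam * pmf (route (insert k S)) k) else 0) = 0"
      by (rule sum.neutral) (use z in auto)
    have r2: "(\<Sum>k\<in>S. if y = (S - {k}, 0) then pmf p (S-{k},0) * mu k else 0) = 0"
      by (rule sum.neutral) (use z in auto)
    show ?thesis using z r1 r2 by simp
  qed
  have "(\<Sum>\<^sub>\<infinity>y. pmf p y * trans_rate lam gam N mu route y (S,0)) =
    (\<Sum>\<^sub>\<infinity>y. (\<Sum>k\<in>{..<N}-S. if y = (insert k S, 0::nat) then pmf p (insert k S,0) * (lam * pmf (route (insert k S)) k) else 0)
   + (\<Sum>k\<in>S. if y = (S - {k}, 0) then pmf p (S-{k},0) * mu k else 0))"
    by (rule infsum_cong) (rule pt)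
  also have "\<dots> = (\<Sum>k\<in>{..<N}-S. pmf p (insert k S,0) * (lam * pmf (route (insert k S)) k))
     + (\<Sum>k\<in>S. pmf p (S-{k},0) * mu k)"
    using finS by (intro infsum_points2) simp_all
  finally show ?thesis using bal out by (simp add: sum_distrib_left mult_ac)
qed


definition Lv :: "nat \<Rightarrow> nat \<Rightarrow> nat set set" where
  "Lv N j = {S. S \<subseteq> {..<N} \<and> card S = j}"

lemma Lv_finite[simp]: "finite (Lv N j)"
  unfolding Lv_def by (rule finite_subset[of _ "Pow {..<N}"]) auto

lemma Lv_memD: "S \<in> Lv N j \<Longrightarrow> S \<subseteq> {..<N} \<and> card S = j \<and> finite S"
  unfolding Lv_def using finite_subset by auto

lemma reindex1:
  fixes g :: "nat set \<Rightarrow> nat \<Rightarrow> real"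
  shows "(\<Sum>S\<in>Lv N m. \<Sum>k\<in>{..<N}-S. g (insert k S) k) = (\<Sum>T\<in>Lv N (Suc m). \<Sum>k\<in>T. g T k)"
proof -
  have "(\<Sum>S\<in>Lv N m. \<Sum>k\<in>{..<N}-S. g (insert k S) k) = (\<Sum>(S,k)\<in>Sigma (Lv N m) (\<lambda>S. {..<N}-S). g (insert k S) k)"
    by (rule sum.Sigma) auto
  also have "\<dots> = (\<Sum>(T,k)\<in>Sigma (Lv N (Suc m)) (\<lambda>T. T). g T k)"
  proof (rule sum.reindex_bij_witness[where i="\<lambda>(T,k). (T - {k}, k)" and j="\<lambda>(S,k). (insert k S, k)"])
    fix a assume a: "a \<in> Sigma (Lv N m) (\<lambda>S. {..<N}-S)"
    then obtain S k where [simp]: "a = (S,k)" and S: "S \<in> Lv N m" and k: "k \<in> {..<N}" "k \<notin> S" by auto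
    show "(case case a of (S, k) \<Rightarrow> (insert k S, k) of (T, k) \<Rightarrow> (T - {k}, k)) = a" using k by auto
    show "(case a of (S, k) \<Rightarrow> (insert k S, k)) \<in> Sigma (Lv N (Suc m)) (\<lambda>T. T)"
      using Lv_memD[OF S] k by (auto simp: Lv_def)
    show "(case case a of (S, k) \<Rightarrow> (insert k S, k) of (T, k) \<Rightarrow> g T k) = (case a of (S, k) \<Rightarrow> g (insert k S) k)"
      by simp
  next
    fix b assume b: "b \<in> Sigma (Lv N (Suc m)) (\<lambda>T. T)"
    then obtain T k where [simp]: "b = (T,k)" and T: "T \<in> Lv N (Suc m)" and k: "k \<in> T" by auto
    show "(case case b of (T, k) \<Rightarrow> (T - {k}, k) of (S, k) \<Rightarrow> (insert k S, k)) = b" using k by auto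
    show "(case b of (T, k) \<Rightarrow> (T - {k}, k)) \<in> Sigma (Lv N m) (\<lambda>S. {..<N}-S)"
      using Lv_memD[OF T] k by (auto simp: Lv_def)
  qed
  also have "\<dots> = (\<Sum>T\<in>Lv N (Suc m). \<Sum>k\<in>T. g T k)"
    by (rule sum.Sigma[symmetric]) (auto dest: Lv_memD)
  finally show ?thesis .
qed

lemma reindex2:
  fixes g :: "nat set \<Rightarrow> nat \<Rightarrow> real"
  shows "(\<Sum>T\<in>Lv N (Suc m). \<Sum>k\<in>T. g (T - {k}) k) = (\<Sum>S\<in>Lv N m. \<Sum>k\<in>{..<N}-S. g S k)"
proof -
  have "(\<Sum>S\<in>Lv N m. \<Sum>k\<in>{..<N}-S. g S k) = (\<Sum>S\<in>Lv N m. \<Sum>k\<in>{..<N}-S. g (insert k S - {k}) k)"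
    by (intro sum.cong refl) auto
  also have "\<dots> = (\<Sum>T\<in>Lv N (Suc m). \<Sum>k\<in>T. g (T - {k}) k)"
    by (rule reindex1)
  finally show ?thesis by simp
qed

definition Pl :: "(nat set \<times> nat) pmf \<Rightarrow> nat \<Rightarrow> nat \<Rightarrow> real" where
  "Pl p N j = (\<Sum>S\<in>Lv N j. pmf p (S,0))"

definition up :: "(nat set \<times> nat) pmf \<Rightarrow> nat \<Rightarrow> (nat \<Rightarrow> real) \<Rightarrow> nat \<Rightarrow> real" where
  "up p N mu j = (\<Sum>S\<in>Lv N j. pmf p (S,0) * (\<Sum>k\<in>{..<N}-S. mu k))"

lemma level_eq:
  assumes stat: "stationary lam gam N mu route p"
    and route_ok: "\<And>S. S \<noteq> {} \<Longrightarrow> set_pmf (route S) \<subseteq> S"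
  shows "lam * Pl p N (Suc m) + up p N mu (Suc m) = lam * Pl p N (Suc (Suc m)) + up p N mu m"
proof -
  have "lam * Pl p N (Suc m) + up p N mu (Suc m) =
      (\<Sum>S\<in>Lv N (Suc m). pmf p (S,0) * (lam + (\<Sum>k\<in>{..<N}-S. mu k)))"
    unfolding Pl_def up_def by (simp add: sum_distrib_left distrib_left sum.distrib mult_ac)
  also have "\<dots> = (\<Sum>S\<in>Lv N (Suc m). lam * (\<Sum>k\<in>{..<N}-S. pmf p (insert k S,0) * pmf (route (insert k S)) k)
     + (\<Sum>k\<in>S. pmf p (S-{k},0) * mu k))"
  proof (rule sum.cong[OF refl])
    fix S assume S: "S \<in> Lv N (Suc m)"
    have "S \<noteq> {}" using Lv_memD[OF S] by auto
    then show "pmf p (S,0) * (lam + (\<Sum>k\<in>{..<N}-S. mu k)) = lam * (\<Sum>k\<in>{..<N}-S. pmf p (insert k S,0) * pmf (route (insert k S)) k)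
     + (\<Sum>k\<in>S. pmf p (S-{k},0) * mu k)"
      using balance_S[OF stat route_ok] Lv_memD[OF S] by blast
  qed
  also have "\<dots> = lam * (\<Sum>S\<in>Lv N (Suc m). \<Sum>k\<in>{..<N}-S. pmf p (insert k S,0) * pmf (route (insert k S)) k)
     + (\<Sum>S\<in>Lv N (Suc m). \<Sum>k\<in>S. pmf p (S-{k},0) * mu k)"
    by (simp add: sum.distrib sum_distrib_left)
  also have "(\<Sum>S\<in>Lv N (Suc m). \<Sum>k\<in>{..<N}-S. pmf p (insert k S,0) * pmf (route (insert k S)) k)
      = (\<Sum>T\<in>Lv N (Suc (Suc m)). \<Sum>k\<in>T. pmf p (T,0) * pmf (route T) k)"
    by (rule reindex1)
  also have "\<dots> = Pl p N (Suc (Suc m))"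
    unfolding Pl_def
  proof (rule sum.cong[OF refl])
    fix T assume T: "T \<in> Lv N (Suc (Suc m))"
    have "T \<noteq> {}" "finite T" using Lv_memD[OF T] by auto
    then show "(\<Sum>k\<in>T. pmf p (T,0) * pmf (route T) k) = pmf p (T,0)"
      using sum_pmf_eq_1[OF \<open>finite T\<close> route_ok] by (simp add: sum_distrib_left[symmetric])
  qed
  also have "(\<Sum>S\<in>Lv N (Suc m). \<Sum>k\<in>S. pmf p (S-{k},0) * mu k) = up p N mu m"
    unfolding up_def sum_distrib_left by (rule reindex2[where g="\<lambda>S k. pmf p (S,0) * mu k"])
  finally show ?thesis .
qed

lemma Lv_top: "Lv N N = {{..<N}}"
proof -
  have "S = {..<N}" if "S \<subseteq> {..<N}" "card S = N" for S
    using card_subset_eq[OF finite_lessThan that(1)] that(2) by (simp only: card_lessThan)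
  then have "S \<in> Lv N N \<longleftrightarrow> S = {..<N}" for S unfolding Lv_def by auto
  then show ?thesis by auto
qed

lemma Lv_over: "Lv N (Suc N) = {}"
proof -
  have "card S \<noteq> Suc N" if "S \<subseteq> {..<N}" for S
  proof -
    have "card S \<le> N" using card_mono[OF finite_lessThan that] by (simp only: card_lessThan)
    then show ?thesis by linarith
  qed
  then show ?thesis unfolding Lv_def by blast
qed

lemma flow_eq:
  assumes stat: "stationary lam gam N mu route p"
    and route_ok: "\<And>S. S \<noteq> {} \<Longrightarrow> set_pmf (route S) \<subseteq> S"
    and j: "j \<le> N"
  shows "lam * Pl p N (Suc j) = up p N mu j"
proof -
  have "up p N mu (N - d) - lam * Pl p N (Suc (N - d)) = 0" if "d \<le> N" for d
    using that
  proof (induction d)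
    case 0
    have "up p N mu N = 0" unfolding up_def Lv_top by simp
    moreover have "Pl p N (Suc N) = 0" unfolding Pl_def Lv_over by simp
    ultimately show ?case by simp
  next
    case (Suc d)
    then obtain m where m: "N - d = Suc m" by (cases "N - d") auto
    have "N - Suc d = m" using m by simp
    then show ?case using level_eq[OF stat route_ok, of m] Suc m by simp
  qed
  from this[of "N - j"] j show ?thesis by simp
qed



lemma Pl_nonneg: "Pl p N j \<ge> 0"
  unfolding Pl_def by (intro sum_nonneg) auto

lemma Pl_le1: "Pl p N j \<le> 1"
proof -
  have inj: "inj_on (\<lambda>S. (S, 0::nat)) (Lv N j)" by (auto simp: inj_on_def)
  have "Pl p N j = sum (pmf p) ((\<lambda>S. (S, 0::nat)) ` Lv N j)"
    unfolding Pl_def by (simp add: sum.reindex[OF inj])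
  also have "\<dots> = measure_pmf.prob p ((\<lambda>S. (S, 0::nat)) ` Lv N j)"
    by (simp add: measure_measure_pmf_finite)
  also have "\<dots> \<le> 1" by simp
  finally show ?thesis .
qed

lemma up_ge:
  assumes mu: "\<And>k. k < N \<Longrightarrow> mu k \<le> mumax"
  shows "up p N mu j \<ge> ((\<Sum>k<N. mu k) - real j * mumax) * Pl p N j"
proof -
  have "((\<Sum>k<N. mu k) - real j * mumax) * Pl p N j = (\<Sum>S\<in>Lv N j. pmf p (S,0) * ((\<Sum>k<N. mu k) - real j * mumax))"
    unfolding Pl_def by (simp add: sum_distrib_left sum_distrib_right mult_ac)
  also have "\<dots> \<le> up p N mu j"
    unfolding up_def
  proof (rule sum_mono)
    fix S assume S: "S \<in> Lv N j"
    have SN: "S \<subseteq> {..<N}" "card S = j" "finite S" using Lv_memD[OF S] by auto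
    have "(\<Sum>k\<in>{..<N}-S. mu k) = (\<Sum>k<N. mu k) - (\<Sum>k\<in>S. mu k)"
      using SN by (simp add: sum_diff)
    moreover have "(\<Sum>k\<in>S. mu k) \<le> (\<Sum>k\<in>S. mumax)"
      using SN mu by (intro sum_mono) auto
    moreover have "(\<Sum>k\<in>S. mumax) = real j * mumax" using SN by simp
    ultimately have "(\<Sum>k<N. mu k) - real j * mumax \<le> (\<Sum>k\<in>{..<N}-S. mu k)" by linarith
    then show "pmf p (S,0) * ((\<Sum>k<N. mu k) - real j * mumax) \<le> pmf p (S,0) * (\<Sum>k\<in>{..<N}-S. mu k)"
      by (intro mult_left_mono) auto
  qed
  finally show ?thesis .
qed

lemma geo:
  assumes stat: "stationary lam gam N mu route p"
    and route_ok: "\<And>S. S \<noteq> {} \<Longrightarrow> set_pmf (route S) \<subseteq> S"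
    and mu: "\<And>k. k < N \<Longrightarrow> mu k \<le> mumax" and mumax: "mumax \<ge> 0"
    and lam: "lam > 0" and E: "E > 0" and J: "J \<le> N"
    and C: "(\<Sum>k<N. mu k) - real J * mumax \<ge> lam + E"
    and j: "1 \<le> j" "j \<le> J"
  shows "Pl p N j \<le> (lam / (lam + E)) ^ (J - j)"
proof -
  define \<rho> where "\<rho> = lam / (lam + E)"
  have rho: "\<rho> \<ge> 0" using lam E by (simp add: \<rho>_def)
  have step: "Pl p N i \<le> \<rho> * Pl p N (Suc i)" if i: "i < J" for i
  proof -
    have "(lam + E) * Pl p N i \<le> ((\<Sum>k<N. mu k) - real i * mumax) * Pl p N i"
    proof (rule mult_right_mono)
      have "real i * mumax \<le> real J * mumax" using i mumax by (intro mult_right_mono) auto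
      then show "lam + E \<le> (\<Sum>k<N. mu k) - real i * mumax" using C by linarith
    qed (rule Pl_nonneg)
    also have "\<dots> \<le> up p N mu i" by (rule up_ge[OF mu])
    also have "\<dots> = lam * Pl p N (Suc i)" using flow_eq[OF stat route_ok, of i] i J by simp
    finally have "(lam + E) * Pl p N i \<le> lam * Pl p N (Suc i)" .
    then show ?thesis using lam E unfolding \<rho>_def by (simp add: field_simps)
  qed
  have "Pl p N (J - d) \<le> \<rho> ^ d" if "d \<le> J - j" for d
    using that
  proof (induction d)
    case 0
    then show ?case using Pl_le1 by simp
  next
    case (Suc d)
    have "J - Suc d < J" using Suc.prems j by simp
    then have "Pl p N (J - Suc d) \<le> \<rho> * Pl p N (Suc (J - Suc d))" by (rule step)
    also have "Suc (J - Suc d) = J - d" using Suc.prems j by simp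
    also have "\<rho> * Pl p N (J - d) \<le> \<rho> * \<rho> ^ d"
      using Suc rho by (intro mult_left_mono) auto
    finally show ?case by simp
  qed
  from this[of "J - j"] j show ?thesis unfolding \<rho>_def by simp
qed

lemma inv_idle_le: "inv_idle \<alpha> n x \<le> real n powr \<alpha>"
proof -
  have "real n powr \<alpha> / real (idle_count x) \<le> real n powr \<alpha>" if "idle_count x > 0"
  proof -
    have "real n powr \<alpha> * 1 \<le> real n powr \<alpha> * real (idle_count x)"
      using that by (intro mult_left_mono) auto
    then show ?thesis using that by (simp add: divide_le_eq)
  qed
  then show ?thesis unfolding inv_idle_def by auto
qed

lemma inv_idle_nonneg: "inv_idle \<alpha> n x \<ge> 0"
  unfolding inv_idle_def by auto


lemma sum_A'_group:
  fixes g :: "nat set \<Rightarrow> real"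
  shows "(\<Sum>S\<in>{S. S \<subseteq> {..<N} \<and> 1 \<le> card S \<and> card S \<le> K}. g S) = (\<Sum>j\<in>{1..K}. \<Sum>S\<in>Lv N j. g S)"
proof -
  let ?A = "{S. S \<subseteq> {..<N} \<and> 1 \<le> card S \<and> card S \<le> K}"
  have fin: "finite ?A" by (rule finite_subset[of _ "Pow {..<N}"]) auto
  have "(\<Sum>S\<in>?A. g S) = (\<Sum>j\<in>{1..K}. \<Sum>S\<in>{S\<in>?A. card S = j}. g S)"
    by (rule sum.group[symmetric]) (use fin in auto)
  also have "\<dots> = (\<Sum>j\<in>{1..K}. \<Sum>S\<in>Lv N j. g S)"
  proof (rule sum.cong[OF refl])
    fix j assume "j \<in> {1..K}"
    then have "{S\<in>?A. card S = j} = Lv N j" unfolding Lv_def by auto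
    then show "(\<Sum>S\<in>{S\<in>?A. card S = j}. g S) = (\<Sum>S\<in>Lv N j. g S)" by simp
  qed
  finally show ?thesis .
qed

lemma inner:
  assumes val: "set_pmf p \<subseteq> {x. valid_state N x}"
    and M: "M > 0"
    and K: "\<And>j. 1 \<le> j \<Longrightarrow> real j * M < real n powr \<alpha> \<Longrightarrow> j \<le> K"
  shows "(\<integral>\<^sup>+x. ennreal (inv_idle \<alpha> n x) * indicator {x. inv_idle \<alpha> n x > M} x \<partial>measure_pmf p)
     \<le> ennreal (real n powr \<alpha> * (\<Sum>j\<in>{1..K}. Pl p N j))"
proof -
  define A' where "A' = {S. S \<subseteq> {..<N} \<and> 1 \<le> card S \<and> card S \<le> K}"
  define A where "A = (\<lambda>S. (S, 0::nat)) ` A'"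
  have finA': "finite A'" unfolding A'_def by (rule finite_subset[of _ "Pow {..<N}"]) auto
  have finA: "finite A" unfolding A_def using finA' by simp
  have inj: "inj_on (\<lambda>S. (S, 0::nat)) A'" by (auto simp: inj_on_def)
  let ?f = "\<lambda>x. ennreal (inv_idle \<alpha> n x) * indicator {x. inv_idle \<alpha> n x > M} x"
  have zero: "?f x = 0" if x: "x \<in> set_pmf p" "x \<notin> A" for x
  proof (rule ccontr)
    assume nz: "?f x \<noteq> 0"
    then have gt: "inv_idle \<alpha> n x > M" by (auto simp: indicator_def)
    then have ic: "idle_count x > 0" using M unfolding inv_idle_def by (auto split: if_splits)
    define j where "j = card (fst x)"
    have j1: "1 \<le> j" using ic unfolding j_def idle_count_def by simp
    have "real n powr \<alpha> / real j > M" using gt ic unfolding inv_idle_def j_def idle_count_def by simp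
    then have "real j * M < real n powr \<alpha>" using j1 by (simp add: field_simps)
    then have jK: "j \<le> K" using K j1 by blast
    have v: "valid_state N x" using val x by auto
    then have "fst x \<subseteq> {..<N}" "snd x > 0 \<longrightarrow> fst x = {}" unfolding valid_state_def by auto
    moreover have "fst x \<noteq> {}" using j1 unfolding j_def by auto
    ultimately have "fst x \<in> A'" "snd x = 0" using j1 jK unfolding A'_def j_def by auto
    then have "x \<in> A" unfolding A_def by (metis image_eqI prod.collapse)
    then show False using x by simp
  qed
  have "(\<integral>\<^sup>+x. ?f x \<partial>measure_pmf p) = (\<Sum>x\<in>A. ?f x * pmf p x)"
    by (rule nn_integral_measure_pmf_support[OF finA]) (use zero in auto)
  also have "\<dots> \<le> (\<Sum>x\<in>A. ennreal (real n powr \<alpha> * pmf p x))"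
  proof (rule sum_mono)
    fix x assume "x \<in> A"
    have "?f x \<le> ennreal (real n powr \<alpha>)"
      using inv_idle_le[of \<alpha> n x] by (auto simp: indicator_def)
    then have "?f x * ennreal (pmf p x) \<le> ennreal (real n powr \<alpha>) * ennreal (pmf p x)"
      by (rule mult_right_mono) simp
    then show "?f x * ennreal (pmf p x) \<le> ennreal (real n powr \<alpha> * pmf p x)"
      by (simp add: ennreal_mult)
  qed
  also have "\<dots> = ennreal (\<Sum>x\<in>A. real n powr \<alpha> * pmf p x)"
    by (rule sum_ennreal) simp
  also have "(\<Sum>x\<in>A. real n powr \<alpha> * pmf p x) = real n powr \<alpha> * (\<Sum>S\<in>A'. pmf p (S,0))"
    unfolding A_def by (simp add: sum.reindex[OF inj] sum_distrib_left)
  also have "(\<Sum>S\<in>A'. pmf p (S,0)) = (\<Sum>j\<in>{1..K}. Pl p N j)"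
    unfolding A'_def Pl_def by (rule sum_A'_group)
  finally show ?thesis .
qed


lemma inner_le_const:
  "(\<integral>\<^sup>+x. ennreal (inv_idle \<alpha> n x) * indicator {x. inv_idle \<alpha> n x > M} x \<partial>measure_pmf p)
     \<le> ennreal (real n powr \<alpha>)"
proof -
  have "(\<integral>\<^sup>+x. ennreal (inv_idle \<alpha> n x) * indicator {x. inv_idle \<alpha> n x > M} x \<partial>measure_pmf p)
     \<le> (\<integral>\<^sup>+x. ennreal (real n powr \<alpha>) \<partial>measure_pmf p)"
    by (intro nn_integral_mono) (auto simp: indicator_def inv_idle_le)
  also have "\<dots> = ennreal (real n powr \<alpha>)"
    by (simp add: measure_pmf.emeasure_space_1)
  finally show ?thesis .
qed

lemma sum_geo_le:
  assumes "0 \<le> \<rho>" "\<rho> \<le> 1" "K \<le> J"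
  shows "(\<Sum>j\<in>{1..K}. \<rho> ^ (J - j)) \<le> real K * \<rho> ^ (J - K)"
proof -
  have "(\<Sum>j\<in>{1..K}. \<rho> ^ (J - j)) \<le> (\<Sum>j\<in>{1..K}. \<rho> ^ (J - K))"
    using assms by (intro sum_mono power_decreasing) auto
  also have "\<dots> = real K * \<rho> ^ (J - K)" by simp
  finally show ?thesis .
qed

lemma outer_bound:
  fixes P :: "(nat \<Rightarrow> real) measure"
  assumes P: "prob_space P"
    and AEgood: "AE mu in P. (\<forall>k<N. mu k \<le> mumax) \<and> stationary lam gam N mu (route mu) (\<pi> mu)"
    and route_ok: "\<And>mu S. S \<noteq> {} \<Longrightarrow> set_pmf (route mu S) \<subseteq> S"
    and mumax: "mumax \<ge> 0" and lam: "lam > 0" and E: "E > 0" and J: "J \<le> N"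
    and M: "M > 0" and KJ: "K \<le> J"
    and Kcond: "\<And>j. 1 \<le> j \<Longrightarrow> real j * M < real n powr \<alpha> \<Longrightarrow> j \<le> K"
    and meas: "(\<lambda>mu. \<Sum>k<N. mu k) \<in> borel_measurable P"
    and h: "h \<ge> 0"
    and bad: "emeasure P {mu \<in> space P. (\<Sum>k<N. mu k) < lam + E + real J * mumax} \<le> ennreal h"
  shows "(\<integral>\<^sup>+mu. (\<integral>\<^sup>+x. ennreal (inv_idle \<alpha> n x) * indicator {x. inv_idle \<alpha> n x > M} x \<partial>measure_pmf (\<pi> mu)) \<partial>P)
     \<le> ennreal (real n powr \<alpha> * h + real n powr \<alpha> * real K * (lam / (lam + E)) ^ (J - K))"
proof -
  define B where "B = {mu \<in> space P. (\<Sum>k<N. mu k) < lam + E + real J * mumax}"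
  have Bm: "B \<in> sets P" unfolding B_def using meas by measurable
  define \<rho> where "\<rho> = lam / (lam + E)"
  have rho: "0 \<le> \<rho>" "\<rho> \<le> 1" using lam E by (auto simp: \<rho>_def)
  let ?c = "real n powr \<alpha> * real K * \<rho> ^ (J - K)"
  have c0: "?c \<ge> 0" using rho by simp
  have pt: "(\<integral>\<^sup>+x. ennreal (inv_idle \<alpha> n x) * indicator {x. inv_idle \<alpha> n x > M} x \<partial>measure_pmf (\<pi> mu))
      \<le> ennreal (real n powr \<alpha>) * indicator B mu + ennreal ?c"
    if mu: "mu \<in> space P" "\<forall>k<N. mu k \<le> mumax" "stationary lam gam N mu (route mu) (\<pi> mu)" for mu
  proof (cases "mu \<in> B")
    case True
    then show ?thesis using inner_le_const[where p="\<pi> mu" and \<alpha>=\<alpha> and n=n and M=M]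
      by (simp add: order_trans[OF _ add_increasing2])
  next
    case False
    then have C: "(\<Sum>k<N. mu k) - real J * mumax \<ge> lam + E" using mu(1) unfolding B_def by auto
    have val: "set_pmf (\<pi> mu) \<subseteq> {x. valid_state N x}" using mu(3) unfolding stationary_def by blast
    have "(\<integral>\<^sup>+x. ennreal (inv_idle \<alpha> n x) * indicator {x. inv_idle \<alpha> n x > M} x \<partial>measure_pmf (\<pi> mu))
        \<le> ennreal (real n powr \<alpha> * (\<Sum>j\<in>{1..K}. Pl (\<pi> mu) N j))"
      by (rule inner[OF val M Kcond])
    also have "\<dots> \<le> ennreal (real n powr \<alpha> * (\<Sum>j\<in>{1..K}. \<rho> ^ (J - j)))"
    proof (intro ennreal_leI mult_left_mono sum_mono)
      fix j assume "j \<in> {1..K}"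
      then show "Pl (\<pi> mu) N j \<le> \<rho> ^ (J - j)" unfolding \<rho>_def
        using KJ by (intro geo[OF mu(3) route_ok _ mumax lam E J C]) (use mu(2) in auto)
    qed simp
    also have "\<dots> \<le> ennreal ?c"
      using sum_geo_le[OF rho KJ] by (intro ennreal_leI) (simp add: mult.assoc mult_left_mono)
    finally show ?thesis using False by simp
  qed
  have "(\<integral>\<^sup>+mu. (\<integral>\<^sup>+x. ennreal (inv_idle \<alpha> n x) * indicator {x. inv_idle \<alpha> n x > M} x \<partial>measure_pmf (\<pi> mu)) \<partial>P)
     \<le> (\<integral>\<^sup>+mu. ennreal (real n powr \<alpha>) * indicator B mu + ennreal ?c \<partial>P)"
  proof (rule nn_integral_mono_AE)
    show "AE mu in P. (\<integral>\<^sup>+x. ennreal (inv_idle \<alpha> n x) * indicator {x. inv_idle \<alpha> n x > M} x \<partial>measure_pmf (\<pi> mu))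
      \<le> ennreal (real n powr \<alpha>) * indicator B mu + ennreal ?c"
      using AEgood AE_space[of P]
    proof eventually_elim
      case (elim mu)
      then show ?case using pt[of mu] by blast
    qed
  qed
  also have "\<dots> = ennreal (real n powr \<alpha>) * emeasure P B + ennreal ?c"
    using Bm prob_space.emeasure_space_1[OF P] by (simp add: nn_integral_add nn_integral_cmult)
  also have "\<dots> \<le> ennreal (real n powr \<alpha>) * ennreal h + ennreal ?c"
    using bad unfolding B_def by (intro add_mono mult_left_mono) auto
  also have "\<dots> = ennreal (real n powr \<alpha> * h + ?c)"
    using c0 h by (simp add: ennreal_mult ennreal_plus)
  finally show ?thesis unfolding \<rho>_def by (simp add: mult.assoc)
qed


lemma hoeff_PiM:
  fixes F :: "real measure"
  assumes F_prob: "prob_space F" and F_sets: "sets F = sets borel"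
    and Fb: "AE x in F. a \<le> x \<and> x \<le> b" and ab: "a < b"
    and N: "N > 0" and eps: "\<epsilon> \<ge> 0"
  shows "measure (PiM {..<N} (\<lambda>_. F)) {x \<in> space (PiM {..<N} (\<lambda>_. F)). (\<Sum>k<N. x k) \<le> real N * (\<integral>x. x \<partial>F) - \<epsilon>}
      \<le> exp (-2 * \<epsilon>\<^sup>2 / (real N * (b - a)\<^sup>2))"
proof -
  define P where "P = PiM {..<N} (\<lambda>_. F)"
  interpret P: prob_space P unfolding P_def by (rule prob_space_PiM) (rule F_prob)
  have meas_comp: "(\<lambda>x. x i) \<in> measurable P F" if "i < N" for i
    unfolding P_def using that by (intro measurable_component_singleton) auto
  have meas_comp': "(\<lambda>x. x i) \<in> borel_measurable P" if "i < N" for i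
    using meas_comp[OF that] by (simp add: measurable_cong_sets[OF refl F_sets])
  have distr_comp: "distr P borel (\<lambda>x. x i) = F" if "i < N" for i
  proof -
    have "distr P borel (\<lambda>x. x i) = distr P F (\<lambda>x. x i)"
      by (rule distr_cong) (simp_all add: F_sets)
    also have "\<dots> = F" unfolding P_def
      by (rule distr_PiM_component) (use F_prob that in auto)
    finally show ?thesis .
  qed
  have indep: "P.indep_vars (\<lambda>_. borel) (\<lambda>i x. x i) {..<N}"
  proof (subst P.indep_vars_iff_distr_eq_PiM')
    show "{..<N} \<noteq> {}" using N by auto
    show "(\<lambda>x. x i) \<in> borel_measurable P" if "i \<in> {..<N}" for i
      using meas_comp' that by auto
    have "distr P (Pi\<^sub>M {..<N} (\<lambda>i. borel)) (\<lambda>x. restrict (\<lambda>i. x i) {..<N}) = distr P P (\<lambda>x. x)"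
    proof (rule distr_cong)
      show "sets (Pi\<^sub>M {..<N} (\<lambda>i. borel)) = sets P"
        unfolding P_def by (rule sets_PiM_cong) (simp_all add: F_sets)
      show "\<And>x. x \<in> space P \<Longrightarrow> restrict (\<lambda>i. x i) {..<N} = x"
        unfolding P_def by (auto simp: space_PiM PiE_def extensional_restrict)
    qed simp
    also have "\<dots> = P" by simp
    also have "P = (Pi\<^sub>M {..<N} (\<lambda>i. distr P borel (\<lambda>x. x i)))"
      unfolding P_def using distr_comp unfolding P_def by (intro PiM_cong) auto
    finally show "distr P (Pi\<^sub>M {..<N} (\<lambda>i. borel)) (\<lambda>x. restrict (\<lambda>i. x i) {..<N}) =
        Pi\<^sub>M {..<N} (\<lambda>i. distr P borel (\<lambda>x. x i))" .
  qed
  have AEb: "AE x in P. x 0 \<in> {a..b}"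
    unfolding P_def using Fb N by (intro AE_PiM_component[where P="\<lambda>x. x \<in> {a..b}"]) (auto simp: F_prob)
  have expY: "P.expectation (\<lambda>x. x 0) = (\<integral>x. x \<partial>F)"
  proof -
    have "(\<integral>x. x \<partial>F) = (\<integral>x. x \<partial>(distr P F (\<lambda>x. x 0)))"
      unfolding P_def using F_prob N by (subst distr_PiM_component) auto
    also have "\<dots> = P.expectation (\<lambda>x. x 0)"
    proof (rule integral_distr[OF meas_comp])
      show "0 < N" by (rule N)
      show "(\<lambda>x::real. x) \<in> borel_measurable F"
        unfolding measurable_cong_sets[OF F_sets refl] by simp
    qed
    finally show ?thesis by simp
  qed
  interpret H: Hoeffding_ineq_iid P "{..<N}" "\<lambda>i x. x i" "\<lambda>x. x 0" a b "P.expectation (\<lambda>x. x 0)"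
  proof unfold_locales
    show "finite {..<N}" by simp
    show "P.indep_vars (\<lambda>_. borel) (\<lambda>i x. x i) {..<N}" by (rule indep)
    show "distr P borel (\<lambda>x. x i) = distr P borel (\<lambda>x. x 0)" if "i \<in> {..<N}" for i
      using distr_comp[of i] distr_comp[of 0] that N by auto
    show "(\<lambda>x. x 0) \<in> borel_measurable P" using meas_comp' N by auto
    show "AE x in P. x 0 \<in> {a..b}" by (rule AEb)
  qed simp
  have "P.prob {x \<in> space P. (\<Sum>i\<in>{..<N}. x i) \<le> real (card {..<N}) * P.expectation (\<lambda>x. x 0) - \<epsilon>}
      \<le> exp (-2 * \<epsilon>\<^sup>2 / (real (card {..<N}) * (b - a)\<^sup>2))"
    by (rule H.Hoeffding_ineq_le[OF eps ab]) (use N in auto)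
  then show ?thesis unfolding P_def[symmetric] expY by simp
qed



lemma powr_at_top_real:
  assumes "p > 0"
  shows "filterlim (\<lambda>x::real. x powr p) at_top at_top"
proof -
  have lim: "filterlim (\<lambda>x::real. exp (p * ln x)) at_top at_top"
    by (rule filterlim_compose[OF exp_at_top])
       (rule filterlim_tendsto_pos_mult_at_top[OF tendsto_const assms ln_at_top])
  have ev: "eventually (\<lambda>x::real. exp (p * ln x) = x powr p) at_top"
    using eventually_gt_at_top[of 0] by eventually_elim (simp add: powr_def mult.commute)
  show ?thesis using filterlim_cong[OF refl refl ev] lim by simp
qed

lemma powr_exp_lim0:
  fixes a k e :: real
  assumes k: "k > 0" and e: "e > 0"
  shows "((\<lambda>L. L powr a * exp (-k * L powr e)) \<longlongrightarrow> 0) at_top"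
proof -
  define m :: nat where "m = nat \<lceil>a / e\<rceil>"
  have am: "a \<le> real m * e"
  proof -
    have "a / e \<le> real m" unfolding m_def by linarith
    then show ?thesis using e by (simp add: field_simps)
  qed
  define u where "u = (\<lambda>L::real. k * L powr e)"
  have u: "filterlim u at_top at_top"
    unfolding u_def by (rule filterlim_tendsto_pos_mult_at_top[OF tendsto_const k powr_at_top_real[OF e]])
  have lim1: "((\<lambda>L. (1 / k ^ m) * (u L ^ m / exp (u L))) \<longlongrightarrow> 0) at_top"
    using tendsto_mult[OF tendsto_const filterlim_compose[OF tendsto_power_div_exp_0 u], of "1 / k ^ m"] by simp
  show ?thesis
  proof (rule tendsto_sandwich[OF _ _ tendsto_const lim1])
    show "eventually (\<lambda>L. 0 \<le> L powr a * exp (-k * L powr e)) at_top" by simp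
    show "eventually (\<lambda>L. L powr a * exp (-k * L powr e) \<le> (1 / k ^ m) * (u L ^ m / exp (u L))) at_top"
      using eventually_ge_at_top[of 1]
    proof eventually_elim
      case (elim L)
      have "L powr a \<le> L powr (real m * e)" using elim am by (intro powr_mono) auto
      also have "\<dots> = (L powr e) ^ m"
        using elim by (simp add: powr_powr[symmetric] powr_realpow mult.commute)
      also have "\<dots> = (1 / k ^ m) * u L ^ m" unfolding u_def using k by (simp add: power_mult_distrib)
      finally have "L powr a \<le> (1 / k ^ m) * u L ^ m" .
      have "L powr a * exp (-k * L powr e) = L powr a / exp (u L)" unfolding u_def by (simp add: exp_minus field_simps)
      also have "\<dots> \<le> ((1 / k ^ m) * u L ^ m) / exp (u L)"
        by (rule divide_right_mono) (use \<open>L powr a \<le> (1 / k ^ m) * u L ^ m\<close> in auto)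
      also have "\<dots> = (1 / k ^ m) * (u L ^ m / exp (u L))" by simp
      finally show ?case .
    qed
  qed
qed

lemma one_minus_pow_le_exp:
  fixes x :: real
  assumes "0 \<le> x" "x \<le> 1"
  shows "(1 - x) ^ m \<le> exp (- (real m * x))"
proof -
  have "1 - x \<le> exp (-x)" using exp_ge_add_one_self[of "-x"] by simp
  then have "(1 - x) ^ m \<le> exp (-x) ^ m" using assms by (intro power_mono) auto
  also have "\<dots> = exp (- (real m * x))" by (simp add: exp_of_nat_mult[symmetric])
  finally show ?thesis .
qed


lemma g_bound:
  fixes \<alpha> \<beta> mubar mumax L lam E Nr eps na w c8 :: real and J K :: nat
  assumes \<alpha>: "1/2 < \<alpha>" "\<alpha> \<le> 1" and \<beta>: "\<beta> > 0" and mub: "mubar > 0" "mubar \<le> mumax"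
    and w: "w > 0" and L: "L \<ge> 1" and lam: "lam = mubar * L"
    and E: "E = \<beta> * mubar * L powr \<alpha> / 4"
    and J: "J = nat \<lfloor>E / mumax\<rfloor>" and K: "K = J div 2" and E2: "E / mumax \<ge> 2"
    and Nr: "Nr = L + \<beta> * L powr \<alpha>" and eps: "eps = \<beta> * mubar * L powr \<alpha> / 2"
    and na: "na \<ge> 0" "na \<le> c8 * L powr \<alpha>"
  shows "na * exp (-2 * eps\<^sup>2 / (Nr * w)) + na * real K * (lam / (lam + E)) ^ (J - K)
     \<le> c8 * L powr \<alpha> * exp (- (\<beta>\<^sup>2 * mubar\<^sup>2 / (2 * (1 + \<beta>) * w)) * L powr (2 * \<alpha> - 1))
      + c8 * (\<beta> * mubar / (4 * mumax)) * L powr (2 * \<alpha>)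
         * exp (- ((\<beta> * mubar / (16 * mumax)) * (\<beta> / (4 + \<beta>))) * L powr (2 * \<alpha> - 1))"
proof -
  define P where "P = L powr \<alpha>"
  have mumax: "mumax > 0" using mub by linarith
  have P0: "P > 0" using L unfolding P_def by simp
  have PL: "P \<le> L" unfolding P_def using L \<alpha> powr_mono[of \<alpha> 1 L] by simp
  have PP: "P * P = L powr (2 * \<alpha>)" unfolding P_def using L by (simp add: powr_add[symmetric])
  have PPL: "P * P / L = L powr (2 * \<alpha> - 1)" using PP L by (simp add: powr_diff)
  have c8: "c8 \<ge> 0"
  proof (rule ccontr)
    assume "\<not> c8 \<ge> 0"
    then have "c8 * L powr \<alpha> < 0" using P0 unfolding P_def by (simp add: mult_neg_pos)
    then show False using na by linarith
  qed
  define k1 where "k1 = \<beta>\<^sup>2 * mubar\<^sup>2 / (2 * (1 + \<beta>) * w)"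
  have Nr_le: "Nr \<le> (1 + \<beta>) * L" using Nr PL \<beta> unfolding P_def by (simp add: algebra_simps)
  have Nr_pos: "Nr > 0" using Nr P0 \<beta> L unfolding P_def by (smt (verit) mult_pos_pos)
  have "k1 * L powr (2 * \<alpha> - 1) = \<beta>\<^sup>2 * mubar\<^sup>2 * (P * P) / (2 * ((1 + \<beta>) * L) * w)"
    unfolding k1_def PPL[symmetric] using L by (simp add: field_simps)
  also have "\<dots> \<le> \<beta>\<^sup>2 * mubar\<^sup>2 * (P * P) / (2 * Nr * w)"
    using Nr_le Nr_pos w \<beta> mub P0 L by (intro divide_left_mono mult_pos_pos mult_right_mono) auto
  also have "\<dots> = 2 * eps\<^sup>2 / (Nr * w)" unfolding eps P_def by (simp add: power2_eq_square field_simps)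
  finally have t1: "exp (-2 * eps\<^sup>2 / (Nr * w)) \<le> exp (- k1 * L powr (2 * \<alpha> - 1))" by simp
  have T1: "na * exp (-2 * eps\<^sup>2 / (Nr * w)) \<le> c8 * L powr \<alpha> * exp (- k1 * L powr (2 * \<alpha> - 1))"
    using t1 na by (intro mult_mono) auto
  define k2 where "k2 = (\<beta> * mubar / (16 * mumax)) * (\<beta> / (4 + \<beta>))"
  define k3 where "k3 = \<beta> * mubar / (4 * mumax)"
  define x where "x = E / (lam + E)"
  have E0: "E > 0" unfolding E using \<beta> mub P0 unfolding P_def by simp
  have lam0: "lam > 0" using lam mub L by simp
  have x01: "0 \<le> x" "x \<le> 1" unfolding x_def using E0 lam0 by auto
  have rho: "lam / (lam + E) = 1 - x" unfolding x_def using E0 lam0 by (simp add: field_simps)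
  have Jle: "real J \<le> E / mumax" unfolding J using E2 by linarith
  have Jge: "real J \<ge> E / mumax - 1" unfolding J using E2 by linarith
  have KJ: "K \<le> J" unfolding K by simp
  have m_ge: "real (J - K) \<ge> E / (4 * mumax)"
  proof -
    have "real (J - K) \<ge> real J / 2" unfolding K by linarith
    moreover have "real J / 2 \<ge> E / (4 * mumax)" using Jge E2 mumax by (simp add: field_simps)
    ultimately show ?thesis by linarith
  qed
  have lamE: "lam + E \<le> mubar * L * (1 + \<beta> / 4)"
    unfolding lam E using PL mub \<beta> unfolding P_def by (simp add: algebra_simps)
  have x_ge: "x \<ge> (\<beta> / (4 + \<beta>)) * (P / L)"
  proof -
    have "(\<beta> / (4 + \<beta>)) * (P / L) = (\<beta> * P / 4) / (L * (1 + \<beta> / 4))"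
      using L \<beta> by (simp add: field_simps)
    also have "\<dots> = (mubar * (\<beta> * P / 4)) / (mubar * (L * (1 + \<beta> / 4)))"
      using mub by simp
    also have "\<dots> = E / (mubar * L * (1 + \<beta> / 4))"
      unfolding E P_def by (simp add: mult_ac)
    finally have "(\<beta> / (4 + \<beta>)) * (P / L) = E / (mubar * L * (1 + \<beta> / 4))" .
    also have "\<dots> \<le> E / (lam + E)"
      using lamE E0 lam0 by (intro divide_left_mono) auto
    finally show ?thesis unfolding x_def .
  qed
  have mx: "real (J - K) * x \<ge> k2 * L powr (2 * \<alpha> - 1)"
  proof -
    have "k2 * L powr (2 * \<alpha> - 1) = (E / (4 * mumax)) * ((\<beta> / (4 + \<beta>)) * (P / L))"
      unfolding k2_def PPL[symmetric] E P_def using L mumax by (simp add: field_simps)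
    also have "\<dots> \<le> real (J - K) * x"
      using m_ge x_ge E0 mumax \<beta> P0 L by (intro mult_mono) auto
    finally show ?thesis .
  qed
  have t2: "(lam / (lam + E)) ^ (J - K) \<le> exp (- k2 * L powr (2 * \<alpha> - 1))"
  proof -
    have "exp (- (real (J - K) * x)) \<le> exp (- k2 * L powr (2 * \<alpha> - 1))" using mx by simp
    then show ?thesis unfolding rho using one_minus_pow_le_exp[OF x01, of "J - K"] by linarith
  qed
  have Kle: "real K \<le> k3 * P"
  proof -
    have "real K \<le> real J" using KJ by simp
    also have "\<dots> \<le> E / mumax" by (rule Jle)
    also have "E / mumax = k3 * P" unfolding k3_def E P_def using mumax by (simp add: field_simps)
    finally show ?thesis .
  qed
  have "na * real K * (lam / (lam + E)) ^ (J - K) \<le> (c8 * P) * (k3 * P) * exp (- k2 * L powr (2 * \<alpha> - 1))"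
  proof -
    have r0: "0 \<le> (lam / (lam + E)) ^ (J - K)" using lam0 E0 by simp
    have a1: "na * real K \<le> (c8 * P) * (k3 * P)"
      using na Kle unfolding P_def by (intro mult_mono) auto
    have a2: "0 \<le> (c8 * P) * (k3 * P)" using c8 P0 mumax mub \<beta> unfolding k3_def by simp
    show ?thesis using mult_mono[OF a1 t2 a2 r0] .
  qed
  also have "\<dots> = c8 * k3 * L powr (2 * \<alpha>) * exp (- k2 * L powr (2 * \<alpha> - 1))"
    using PP by (simp add: algebra_simps)
  finally have T2: "na * real K * (lam / (lam + E)) ^ (J - K) \<le> c8 * k3 * L powr (2 * \<alpha>) * exp (- k2 * L powr (2 * \<alpha> - 1))" .
  show ?thesis using T1 T2 unfolding k1_def k2_def k3_def by simp
qed


theorem lemma7: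
  fixes \<alpha> \<beta> \<gamma> lbar mubar mumin mumax :: real
    and lam :: "nat \<Rightarrow> real" and N :: "nat \<Rightarrow> nat"
    and F :: "real measure"
    and route :: "nat \<Rightarrow> (nat \<Rightarrow> real) \<Rightarrow> nat set \<Rightarrow> nat pmf"
    and \<pi> :: "nat \<Rightarrow> (nat \<Rightarrow> real) \<Rightarrow> qstate pmf"
  assumes alpha: "1/2 < \<alpha>" "\<alpha> \<le> 1"
    and beta: "\<beta> > 0"
    and gamma: "\<gamma> > 0"
    and lam_pos: "\<And>n. lam n > 0"
    and lam_lim: "(\<lambda>n. lam n / real n) \<longlonglongrightarrow> lbar" and lbar: "lbar > 0"
    and F_prob: "prob_space F" and F_sets: "sets F = sets borel"
    and F_mean: "integrable F (\<lambda>x. x)" "mubar = (\<integral>x. x \<partial>F)"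
    and F_bounds: "0 < mumin" "mumin \<le> mumax" "AE x in F. mumin \<le> x \<and> x \<le> mumax"
    and N_def: "\<And>n. real (N n) = lam n / mubar + \<beta> * (lam n / mubar) powr \<alpha>"
    and route_ok: "\<And>n mu S. S \<noteq> {} \<Longrightarrow> set_pmf (route n mu S) \<subseteq> S"
    and pi_stat: "\<And>n mu. (\<forall>k<N n. mumin \<le> mu k \<and> mu k \<le> mumax) \<Longrightarrow>
                    stationary (lam n) \<gamma> (N n) mu (route n mu) (\<pi> n mu)"
    and pi_meas: "\<And>n x. (\<lambda>mu. pmf (\<pi> n mu) x) \<in> borel_measurable (PiM {..<N n} (\<lambda>_. F))"
  shows "((\<lambda>M. SUP n. \<integral>\<^sup>+ mu. (\<integral>\<^sup>+ x. ennreal (inv_idle \<alpha> n x)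
              * indicator {x. inv_idle \<alpha> n x > M} x \<partial>(measure_pmf (\<pi> n mu)))
            \<partial>(PiM {..<N n} (\<lambda>_. F))) \<longlongrightarrow> 0) at_top"
proof -
  interpret F: prob_space F by (rule F_prob)
  have mub1: "mumin \<le> mubar"
    unfolding F_mean(2) by (rule F.integral_ge_const[OF F_mean(1)]) (use F_bounds(3) in \<open>auto elim: eventually_mono\<close>)
  have mub2: "mubar \<le> mumax"
    unfolding F_mean(2) by (rule F.integral_le_const[OF F_mean(1)]) (use F_bounds(3) in \<open>auto elim: eventually_mono\<close>)
  have mub0: "mubar > 0" using mub1 F_bounds by linarith
  have mumax0: "mumax > 0" using mub0 mub2 by linarith
  have alpha0: "\<alpha> > 0" using alpha by linarith
  define T where "T = (\<lambda>n M. \<integral>\<^sup>+ mu. (\<integral>\<^sup>+ x. ennreal (inv_idle \<alpha> n x)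
              * indicator {x. inv_idle \<alpha> n x > M} x \<partial>(measure_pmf (\<pi> n mu)))
            \<partial>(PiM {..<N n} (\<lambda>_. F)))"
  define Lf where "Lf = (\<lambda>n. lam n / mubar)"
  define Ef where "Ef = (\<lambda>n. \<beta> * mubar * Lf n powr \<alpha> / 4)"
  define Jf where "Jf = (\<lambda>n. nat \<lfloor>Ef n / mumax\<rfloor>)"
  define Kf where "Kf = (\<lambda>n. Jf n div 2)"
  define epsf where "epsf = (\<lambda>n. \<beta> * mubar * Lf n powr \<alpha> / 2)"
  define a where "a = mumin"
  define b where "b = mumax + 1"
  define w where "w = (b - a)\<^sup>2"
  define hf where "hf = (\<lambda>n. exp (-2 * (epsf n)\<^sup>2 / (real (N n) * w)))"
  define c8 where "c8 = (2 * mubar / lbar) powr \<alpha>"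
  define M0 where "M0 = c8 / (\<beta> * mubar / (8 * mumax))"
  define k1 where "k1 = \<beta>\<^sup>2 * mubar\<^sup>2 / (2 * (1 + \<beta>) * w)"
  define k2 where "k2 = (\<beta> * mubar / (16 * mumax)) * (\<beta> / (4 + \<beta>))"
  define k3 where "k3 = \<beta> * mubar / (4 * mumax)"
  define G where "G = (\<lambda>L. c8 * L powr \<alpha> * exp (- k1 * L powr (2 * \<alpha> - 1))
      + c8 * k3 * L powr (2 * \<alpha>) * exp (- k2 * L powr (2 * \<alpha> - 1)))"
  have ab: "a < b" unfolding a_def b_def using F_bounds by simp
  have w0: "w > 0" unfolding w_def using ab by simp
  have c80: "c8 > 0" unfolding c8_def using mub0 lbar by simp
  have M00: "M0 > 0" unfolding M0_def using c80 mub0 beta mumax0 by simp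
  have k10: "k1 > 0" unfolding k1_def using beta mub0 w0 by simp
  have k20: "k2 > 0" unfolding k2_def using beta mub0 mumax0 by simp
  have lam_top: "filterlim lam at_top sequentially"
  proof -
    have "filterlim (\<lambda>n. lam n / real n * real n) at_top sequentially"
      by (rule filterlim_tendsto_pos_mult_at_top[OF lam_lim lbar filterlim_real_sequentially])
    moreover have evq: "eventually (\<lambda>n. lam n / real n * real n = lam n) sequentially"
      using eventually_gt_at_top[of "0::nat"] by eventually_elim simp
    ultimately show ?thesis using filterlim_cong[OF refl refl evq] by simp
  qed
  have L_top: "filterlim Lf at_top sequentially"
  proof -
    have "filterlim (\<lambda>n. (1 / mubar) * lam n) at_top sequentially"
      by (rule filterlim_tendsto_pos_mult_at_top[OF tendsto_const _ lam_top]) (use mub0 in simp)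
    then show ?thesis unfolding Lf_def by simp
  qed
  have G0: "(\<lambda>n. G (Lf n)) \<longlonglongrightarrow> 0"
  proof -
    have e: "2 * \<alpha> - 1 > 0" using alpha by simp
    have "(G \<longlongrightarrow> c8 * 0 + c8 * k3 * 0) at_top"
      unfolding G_def mult.assoc
      by (intro tendsto_add tendsto_mult tendsto_const powr_exp_lim0 k10 k20 e)
    then show ?thesis using filterlim_compose[OF _ L_top] by simp
  qed
  have ev: "eventually (\<lambda>n. Lf n \<ge> 1 \<and> Ef n / mumax \<ge> 2 \<and> lam n \<ge> lbar * real n / 2) sequentially"
  proof -
    have e1: "eventually (\<lambda>n. Lf n \<ge> 1) sequentially"
      using L_top by (simp add: filterlim_at_top)
    have "filterlim (\<lambda>n. (\<beta> * mubar / (4 * mumax)) * Lf n powr \<alpha>) at_top sequentially"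
      by (rule filterlim_tendsto_pos_mult_at_top[OF tendsto_const _ filterlim_compose[OF powr_at_top_real[OF alpha0] L_top]])
         (use beta mub0 mumax0 in simp)
    then have e2: "eventually (\<lambda>n. Ef n / mumax \<ge> 2) sequentially"
      unfolding Ef_def by (simp add: filterlim_at_top field_simps)
    have "eventually (\<lambda>n. lam n / real n > lbar / 2) sequentially"
      using order_tendstoD(1)[OF lam_lim, of "lbar / 2"] lbar by simp
    then have e3: "eventually (\<lambda>n. lam n \<ge> lbar * real n / 2) sequentially"
      using eventually_gt_at_top[of "0::nat"] by eventually_elim (simp add: field_simps)
    show ?thesis using e1 e2 e3 by eventually_elim auto
  qed
  then obtain n1 where n1: "\<And>n. n \<ge> n1 \<Longrightarrow> Lf n \<ge> 1 \<and> Ef n / mumax \<ge> 2 \<and> lam n \<ge> lbar * real n / 2"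
    by (auto simp: eventually_sequentially)
  have T0: "T n M = 0" if "real n powr \<alpha> \<le> M" for n M
  proof -
    have z: "(\<lambda>x. ennreal (inv_idle \<alpha> n x) * indicator {x. inv_idle \<alpha> n x > M} x) = (\<lambda>x. 0)"
    proof (rule ext)
      fix x show "ennreal (inv_idle \<alpha> n x) * indicator {x. inv_idle \<alpha> n x > M} x = 0"
        using inv_idle_le[of \<alpha> n x] that by (auto simp: indicator_def)
    qed
    show ?thesis unfolding T_def z by simp
  qed
  have Tbound: "T n M \<le> ennreal (G (Lf n))" if n: "n \<ge> n1" and M: "M \<ge> M0" for n M
  proof -
    have L1: "Lf n \<ge> 1" and E2: "Ef n / mumax \<ge> 2" and lamn: "lam n \<ge> lbar * real n / 2"
      using n1[OF n] by auto
    define P where "P = PiM {..<N n} (\<lambda>_. F)"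
    interpret P: prob_space P unfolding P_def by (rule prob_space_PiM) (rule F_prob)
    have lamL: "lam n = mubar * Lf n" unfolding Lf_def using mub0 by simp
    have Nr: "real (N n) = Lf n + \<beta> * Lf n powr \<alpha>" using N_def[of n] unfolding Lf_def .
    have LP: "Lf n powr \<alpha> > 0" using L1 by simp
    have Npos: "N n > 0" using Nr L1 LP beta
      by (metis add_pos_pos less_le_trans mult_pos_pos of_nat_0_less_iff zero_less_one)
    have E0: "Ef n > 0" unfolding Ef_def using beta mub0 LP by simp
    have Jle: "real (Jf n) \<le> Ef n / mumax" unfolding Jf_def using E2 by linarith
    have Jge: "real (Jf n) \<ge> Ef n / mumax - 1" unfolding Jf_def using E2 by linarith
    have JN: "Jf n \<le> N n"
    proof -
      have "Ef n / mumax \<le> \<beta> * Lf n powr \<alpha> / 4"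
        unfolding Ef_def using mub2 mumax0 beta LP by (simp add: field_simps mult_right_mono)
      also have "\<dots> \<le> real (N n)" unfolding Nr using L1 beta LP by simp
      finally show ?thesis using Jle by simp
    qed
    have M0': "M > 0" using M M00 by linarith
    have na: "real n powr \<alpha> \<le> c8 * Lf n powr \<alpha>"
    proof -
      have "real n \<le> (2 * mubar / lbar) * Lf n"
        using lamn lbar mub0 unfolding Lf_def by (simp add: field_simps)
      then have "real n powr \<alpha> \<le> ((2 * mubar / lbar) * Lf n) powr \<alpha>"
        using alpha0 by (intro powr_mono2) auto
      also have "\<dots> = c8 * Lf n powr \<alpha>" unfolding c8_def using mub0 lbar L1 by (subst powr_mult) auto
      finally show ?thesis .
    qed
    have Kcond: "j \<le> Kf n" if j: "1 \<le> j" "real j * M < real n powr \<alpha>" for j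
    proof (rule ccontr)
      assume "\<not> j \<le> Kf n"
      then have jK: "real j \<ge> real (Kf n) + 1" by simp
      have "real (Kf n) + 1 \<ge> Ef n / (2 * mumax)"
      proof -
        have "Jf n + 1 \<le> 2 * (Jf n div 2 + 1)" by presburger
        then have "real (Jf n + 1) \<le> real (2 * (Jf n div 2 + 1))" by (simp only: of_nat_le_iff)
        then have "real (Jf n) + 1 \<le> 2 * (real (Kf n) + 1)" unfolding Kf_def by simp
        then have "Ef n / mumax \<le> 2 * (real (Kf n) + 1)" using Jge by linarith
        then show ?thesis using mumax0 by (simp add: field_simps)
      qed
      then have jE: "real j \<ge> Ef n / (2 * mumax)" using jK by linarith
      have "c8 * Lf n powr \<alpha> = (Ef n / (2 * mumax)) * M0"
        unfolding Ef_def M0_def using mub0 beta mumax0 by (simp add: field_simps)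
      also have "\<dots> \<le> real j * M"
        using jE M M00 E0 mumax0 by (intro mult_mono) auto
      finally show False using j na by linarith
    qed
    have AEgood: "AE mu in P. (\<forall>k<N n. mu k \<le> mumax) \<and> stationary (lam n) \<gamma> (N n) mu (route n mu) (\<pi> n mu)"
    proof -
      have "AE mu in P. \<forall>k\<in>{..<N n}. mumin \<le> mu k \<and> mu k \<le> mumax"
      proof (rule eventually_ball_finite)
        show "\<forall>k\<in>{..<N n}. AE mu in P. mumin \<le> mu k \<and> mu k \<le> mumax"
        proof
          fix k assume k: "k \<in> {..<N n}"
          show "AE mu in P. mumin \<le> mu k \<and> mu k \<le> mumax"
            unfolding P_def
            by (rule AE_PiM_component[where P="\<lambda>x. mumin \<le> x \<and> x \<le> mumax", OF F_prob k F_bounds(3)])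
        qed
      qed simp
      then show ?thesis
      proof eventually_elim
        case (elim mu)
        then show ?case using pi_stat[of n mu] by auto
      qed
    qed
    have meas: "(\<lambda>mu. \<Sum>k<N n. mu k) \<in> borel_measurable P"
    proof (rule borel_measurable_sum)
      fix k assume "k \<in> {..<N n}"
      then have "(\<lambda>mu. mu k) \<in> measurable P F"
        unfolding P_def by (intro measurable_component_singleton) auto
      then show "(\<lambda>mu. mu k) \<in> borel_measurable P" by (simp add: measurable_cong_sets[OF refl F_sets])
    qed
    have hf0: "hf n \<ge> 0" unfolding hf_def by simp
    have bad: "emeasure P {mu \<in> space P. (\<Sum>k<N n. mu k) < lam n + Ef n + real (Jf n) * mumax} \<le> ennreal (hf n)"
    proof -
      define B where "B = {mu \<in> space P. (\<Sum>k<N n. mu k) \<le> real (N n) * (\<integral>x. x \<partial>F) - epsf n}"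
      have Bm: "B \<in> sets P" unfolding B_def using meas by measurable
      have thr: "lam n + Ef n + real (Jf n) * mumax \<le> real (N n) * (\<integral>x. x \<partial>F) - epsf n"
      proof -
        have "real (Jf n) * mumax \<le> Ef n" using Jle mumax0 by (simp add: field_simps)
        moreover have "real (N n) * (\<integral>x. x \<partial>F) - epsf n = lam n + 2 * Ef n"
          unfolding F_mean(2)[symmetric] Nr epsf_def Ef_def lamL by (simp add: field_simps)
        ultimately show ?thesis by linarith
      qed
      have "emeasure P {mu \<in> space P. (\<Sum>k<N n. mu k) < lam n + Ef n + real (Jf n) * mumax} \<le> emeasure P B"
        using Bm thr unfolding B_def by (intro emeasure_mono) auto
      also have "\<dots> = ennreal (P.prob B)" by (rule P.emeasure_eq_measure)
      also have "P.prob B \<le> exp (-2 * (epsf n)\<^sup>2 / (real (N n) * (b - a)\<^sup>2))"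
        unfolding B_def P_def
        by (rule hoeff_PiM[OF F_prob F_sets _ ab Npos])
           (use F_bounds(3) E0 in \<open>auto simp: a_def b_def epsf_def Ef_def elim: eventually_mono\<close>)
      then have "ennreal (P.prob B) \<le> ennreal (hf n)" unfolding hf_def w_def by (rule ennreal_leI)
      finally show ?thesis .
    qed
    have "T n M \<le> ennreal (real n powr \<alpha> * hf n + real n powr \<alpha> * real (Kf n) * (lam n / (lam n + Ef n)) ^ (Jf n - Kf n))"
      unfolding T_def P_def[symmetric]
      by (rule outer_bound[OF P.prob_space_axioms AEgood route_ok _ lam_pos E0 JN M0' _ Kcond meas hf0 bad])
         (use mumax0 in \<open>auto simp: Kf_def\<close>)
    also have "\<dots> \<le> ennreal (G (Lf n))"
      unfolding G_def k1_def k2_def k3_def hf_def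
    proof (rule ennreal_leI, rule g_bound[where E="Ef n" and J="Jf n" and K="Kf n" and eps="epsf n" and Nr="real (N n)"])
      show "Ef n = \<beta> * mubar * Lf n powr \<alpha> / 4" by (simp add: Ef_def)
      show "Jf n = nat \<lfloor>Ef n / mumax\<rfloor>" by (simp add: Jf_def)
      show "Kf n = Jf n div 2" by (simp add: Kf_def)
      show "epsf n = \<beta> * mubar * Lf n powr \<alpha> / 2" by (simp add: epsf_def)
    qed (use alpha beta mub0 mub2 w0 L1 lamL E2 Nr na in auto)
    finally show ?thesis .
  qed
  have "((\<lambda>M. SUP n. T n M) \<longlongrightarrow> 0) at_top"
  proof (rule order_tendstoI)
    fix e :: ennreal assume "e < 0" then show "eventually (\<lambda>M. e < (SUP n. T n M)) at_top" by simp
  next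
    fix e :: ennreal assume e: "0 < e"
    obtain d where d: "0 < d" "d < e" using dense[OF e] by blast
    define r where "r = enn2real d"
    have dtop: "d < top" using d top.not_eq_extremum by fastforce
    have dr: "d = ennreal r" unfolding r_def using dtop by (simp add: ennreal_enn2real)
    have r0: "r > 0" using d(1) dtop unfolding r_def by (simp add: enn2real_positive_iff)
    have "eventually (\<lambda>n. G (Lf n) < r) sequentially"
      using order_tendstoD(2)[OF G0 r0] .
    then obtain n2 where n2: "\<And>n. n \<ge> n2 \<Longrightarrow> G (Lf n) < r" by (auto simp: eventually_sequentially)
    define n3 where "n3 = max n1 n2"
    show "eventually (\<lambda>M. (SUP n. T n M) < e) at_top"
      using eventually_ge_at_top[of "max M0 (real n3 powr \<alpha>)"]
    proof eventually_elim
      case (elim M)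
      have "(SUP n. T n M) \<le> ennreal r"
      proof (rule SUP_least)
        fix n
        show "T n M \<le> ennreal r"
        proof (cases "n < n3")
          case True
          have "real n powr \<alpha> \<le> real n3 powr \<alpha>" using True alpha0 by (intro powr_mono2) auto
          then have "T n M = 0" using elim by (intro T0) linarith
          then show ?thesis by simp
        next
          case False
          then have "n \<ge> n1" "n \<ge> n2" unfolding n3_def by auto
          have "T n M \<le> ennreal (G (Lf n))" using Tbound[OF \<open>n \<ge> n1\<close>] elim by simp
          also have "\<dots> \<le> ennreal r" using n2[OF \<open>n \<ge> n2\<close>] by (intro ennreal_leI) simp
          finally show ?thesis .
        qed
      qed
      also have "ennreal r < e" using d dr by simp
      finally show ?case .
    qed
  qed
  then show ?thesis unfolding T_def .
qed


end
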